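(* Let $(S,\ast)$ be an adequate commutative partial semigroup. Then $J_\delta(S)$ is a closed two-sided ideal of $\delta S$.
   Context: A partial semigroup is a pair $(S,\ast)$ where $\ast$ is an operation defined on a subset of $S\times S$ such that for all $x,y,z\in S$, $(x\ast y)\ast z=x\ast(y\ast z)$ in the sense that if either side is defined, so is the other and they are equal; it is commutative if $x\ast y=y\ast x$ whenever defined. For $s\in S$, $\phi_S(s)=\{t\in S: s\ast t\text{ is defined}\}$; for $H\in\mathcal{P}_f(S)$ (finite nonempty subsets), $\sigma_S(H)=\bigcap_{s\in H}\phi_S(s)$. $(S,\ast)$ is adequate if $\sigma_S(H)\ne\emptyset$ for all $H\in\mathcal{P}_f(S)$. $\beta S$ is the Stone–Čech compactification of discrete $S$ (ultrafilters on $S$, with basic open sets $\overline{A}=\{p: A\in p\}$), and $\delta S=\bigcap_{x\in S}\overline{\phi_S(x)}\subseteq\beta S$. For $s\in S$ and $A\subseteq S$, $s^{-1}A=\{t\in\phi_S(s): s\ast t\in A\}$; for $p\in\beta S$, $q\in\delta S$, $p\ast q=\{A\subseteq S:\{s\in S: s^{-1}A\in q\}\in p\}$. With this operation $\delta S$ is a compact right topological semigroup. A sequence $\langle y_n\rangle$ in $S$ is adequate if $\prod_{n\in F}y_n$ is defined for every $F\in\mathcal{P}_f(\mathbb{N})$ and for every $K\in\mathcal{P}_f(S)$ there is $m$ with $\prod_{n\in F}y_n\in\sigma_S(K)$ for all $F\in\mathcal{P}_f(\mathbb{N})$ with $\min F\ge m$. $\mathcal{T}_S$ is the set of adequate sequences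 in $S$. For $W\in\mathcal{P}_f(S)$, $a\in S$, $W\ast a=\{w\ast a: w\in W,\ w\ast a\text{ defined}\}$. $A\subseteq S$ is a $J_\delta$-set if for every $F\in\mathcal{P}_f(\mathcal{T}_S)$ and $W\in\mathcal{P}_f(S)$ there exist $a\in\sigma_S(W)$ and $H\in\mathcal{P}_f(\mathbb{N})$ such that for each $f\in F$, $\prod_{t\in H}f(t)\in\sigma_S(W\ast a)$ and $a\ast\prod_{t\in H}f(t)\in A$. $J_\delta(S)=\{p\in\delta S: \text{every } A\in p \text{ is a } J_\delta\text{-set}\}$. *)

theory Defs
  imports Main
begin

text \<open>A partial operation on the ground type 'a (the set S is the universe of 'a);
  None means "undefined".\<close>
type_synonym 'a pop = "'a \<Rightarrow> 'a \<Rightarrow> 'a option"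

definition partial_semigroup :: "'a pop \<Rightarrow> bool" where
  "partial_semigroup op \<longleftrightarrow>
     (\<forall>x y z. Option.bind (op x y) (\<lambda>u. op u z) = Option.bind (op y z) (\<lambda>v. op x v))"

definition commutative_ps :: "'a pop \<Rightarrow> bool" where
  "commutative_ps op \<longleftrightarrow> (\<forall>x y. op x y = op y x)"

definition phiS :: "'a pop \<Rightarrow> 'a \<Rightarrow> 'a set" where
  "phiS op s = {t. op s t \<noteq> None}"

definition sigmaS :: "'a pop \<Rightarrow> 'a set \<Rightarrow> 'a set" where
  "sigmaS op H = (\<Inter>s\<in>H. phiS op s)"

definition adequate :: "'a pop \<Rightarrow> bool" where
  "adequate op \<longleftrightarrow> (\<forall>H. finite H \<and> H \<noteq> {} \<longrightarrow> sigmaS op H \<noteq> {})"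

definition ultrafilter_on :: "'a set set \<Rightarrow> bool" where
  "ultrafilter_on p \<longleftrightarrow>
     UNIV \<in> p \<and> {} \<notin> p \<and>
     (\<forall>A B. A \<in> p \<and> A \<subseteq> B \<longrightarrow> B \<in> p) \<and>
     (\<forall>A B. A \<in> p \<and> B \<in> p \<longrightarrow> A \<inter> B \<in> p) \<and>
     (\<forall>A. A \<in> p \<or> - A \<in> p)"

definition betaS :: "'a set set set" where
  "betaS = {p. ultrafilter_on p}"

definition deltaS :: "'a pop \<Rightarrow> 'a set set set" where
  "deltaS op = {p \<in> betaS. \<forall>x. phiS op x \<in> p}"

definition linv :: "'a pop \<Rightarrow> 'a \<Rightarrow> 'a set \<Rightarrow> 'a set" where
  "linv op s A = {t. \<exists>u. op s t = Some u \<and> u \<in> A}"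

definition ult_mult :: "'a pop \<Rightarrow> 'a set set \<Rightarrow> 'a set set \<Rightarrow> 'a set set" where
  "ult_mult op p q = {A. {s. linv op s A \<in> q} \<in> p}"

text \<open>Closedness of a subset X of delta S in the subspace topology of beta S,
  whose basic open sets are cl A = {p. A \<in> p}.\<close>
definition closed_in_deltaS :: "'a pop \<Rightarrow> 'a set set set \<Rightarrow> bool" where
  "closed_in_deltaS op X \<longleftrightarrow>
     (\<forall>p \<in> deltaS op - X. \<exists>A \<in> p. \<forall>r \<in> X. A \<notin> r)"

fun plprod :: "'a pop \<Rightarrow> 'a list \<Rightarrow> 'a option" where
  "plprod op [] = None"
| "plprod op [x] = Some x"
| "plprod op (x # y # xs) = Option.bind (plprod op (y # xs)) (op x)"

definition seqprod :: "'a pop \<Rightarrow> (nat \<Rightarrow> 'a) \<Rightarrow> nat set \<Rightarrow> 'a option" where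
  "seqprod op y F = plprod op (map y (sorted_list_of_set F))"

definition adequate_seq :: "'a pop \<Rightarrow> (nat \<Rightarrow> 'a) \<Rightarrow> bool" where
  "adequate_seq op y \<longleftrightarrow>
     (\<forall>F. finite F \<and> F \<noteq> {} \<longrightarrow> seqprod op y F \<noteq> None) \<and>
     (\<forall>K. finite K \<and> K \<noteq> {} \<longrightarrow>
        (\<exists>m. \<forall>F. finite F \<and> F \<noteq> {} \<and> Min F \<ge> m \<longrightarrow>
              (\<exists>v. seqprod op y F = Some v \<and> v \<in> sigmaS op K)))"

definition TS :: "'a pop \<Rightarrow> (nat \<Rightarrow> 'a) set" where
  "TS op = {y. adequate_seq op y}"

definition rmult_set :: "'a pop \<Rightarrow> 'a set \<Rightarrow> 'a \<Rightarrow> 'a set" where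
  "rmult_set op W a = {u. \<exists>w\<in>W. op w a = Some u}"

definition J_delta_set :: "'a pop \<Rightarrow> 'a set \<Rightarrow> bool" where
  "J_delta_set op A \<longleftrightarrow>
     (\<forall>F W. finite F \<and> F \<noteq> {} \<and> F \<subseteq> TS op \<and> finite W \<and> W \<noteq> {} \<longrightarrow>
        (\<exists>a \<in> sigmaS op W. \<exists>H. finite H \<and> H \<noteq> {} \<and>
           (\<forall>f \<in> F. \<exists>v. seqprod op f H = Some v \<and>
                 v \<in> sigmaS op (rmult_set op W a) \<and>
                 (\<exists>u. op a v = Some u \<and> u \<in> A))))"

definition J_delta :: "'a pop \<Rightarrow> 'a set set set" where
  "J_delta op = {p \<in> deltaS op. \<forall>A \<in> p. J_delta_set op A}"

end

theory Submission
  imports Defs "HOL-Library.FuncSet" "HOL-Library.Multiset"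
begin
definition words :: "nat \<Rightarrow> nat \<Rightarrow> nat list set" where
  "words n k = {w. length w = n \<and> set w \<subseteq> {..<k}}"

definition inst :: "nat option list \<Rightarrow> nat \<Rightarrow> nat list" where
  "inst t x = map (\<lambda>z. case z of None \<Rightarrow> x | Some a \<Rightarrow> a) t"

definition is_line :: "nat \<Rightarrow> nat \<Rightarrow> nat option list \<Rightarrow> bool" where
  "is_line n k t \<longleftrightarrow> length t = n \<and> None \<in> set t \<and> (\<forall>a. Some a \<in> set t \<longrightarrow> a < k)"

definition HJ_prop :: "nat \<Rightarrow> nat \<Rightarrow> bool" where
  "HJ_prop k r \<longleftrightarrow> (\<exists>N. \<forall>c. (\<forall>w\<in>words N k. c w < r) \<longrightarrow>
      (\<exists>t. is_line N k t \<and> (\<forall>x<k. c (inst t x) = c (inst t 0))))"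

lemma finite_words: "finite (words n k)"
proof -
  have "words n k = {xs. set xs \<subseteq> {..<k} \<and> length xs = n}" by (auto simp: words_def)
  then show ?thesis using finite_lists_length_eq[of "{..<k}" n] by simp
qed

lemma inst_append: "inst (t1 @ t2) x = inst t1 x @ inst t2 x"
  by (simp add: inst_def)

lemma inst_Some: "inst (map Some f) x = f"
  by (induct f) (auto simp: inst_def)

lemma length_inst[simp]: "length (inst t x) = length t"
  by (simp add: inst_def)

lemma inst_in_words: "is_line n k t \<Longrightarrow> x < k \<Longrightarrow> inst t x \<in> words n k"
  by (auto simp: is_line_def words_def inst_def split: option.splits)

lemma words_append: "u \<in> words n k \<Longrightarrow> v \<in> words m k \<Longrightarrow> u @ v \<in> words (n + m) k"
  by (auto simp: words_def)

lemma words_mono: "u \<in> words n k \<Longrightarrow> k \<le> k' \<Longrightarrow> u \<in> words n k'"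
  by (auto simp: words_def)

lemma line_mono: "is_line n k t \<Longrightarrow> k \<le> k' \<Longrightarrow> is_line n k' t"
  by (auto simp: is_line_def)

lemma line_append: "is_line n k t \<Longrightarrow> is_line m k l \<Longrightarrow> is_line (n + m) k (t @ l)"
  by (auto simp: is_line_def)

lemma line_append_fixed: "is_line n k t \<Longrightarrow> v \<in> words m k \<Longrightarrow> is_line (n + m) k (t @ map Some v)"
  by (auto simp: is_line_def words_def)

lemma fixed_append_line: "v \<in> words n k \<Longrightarrow> is_line m k t \<Longrightarrow> is_line (n + m) k (map Some v @ t)"
  by (auto simp: is_line_def words_def)

lemma HJ_step:
  assumes k1: "k \<ge> 1" and IH: "\<forall>r. HJ_prop k r"
  shows "HJ_prop (Suc k) r"
proof -
  have claim: "\<exists>n. \<forall>c. (\<forall>w\<in>words n (Suc k). c w < r) \<longrightarrow>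
      (\<exists>t. is_line n (Suc k) t \<and> (\<forall>x<Suc k. c (inst t x) = c (inst t 0))) \<or>
      (\<exists>f\<in>words n (Suc k). \<exists>ts. length ts = s \<and>
          (\<forall>t\<in>set ts. is_line n (Suc k) t \<and> inst t k = f \<and> (\<forall>x<k. c (inst t x) = c (inst t 0))) \<and>
          distinct (map (\<lambda>t. c (inst t 0)) ts))" for s
  proof (induction s)
    case 0
    show ?case
      by (rule exI[of _ 0]) (auto simp: words_def)
  next
    case (Suc s)
    then obtain n where hn: "\<forall>c. (\<forall>w\<in>words n (Suc k). c w < r) \<longrightarrow>
      (\<exists>t. is_line n (Suc k) t \<and> (\<forall>x<Suc k. c (inst t x) = c (inst t 0))) \<or>
      (\<exists>f\<in>words n (Suc k). \<exists>ts. length ts = s \<and>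
          (\<forall>t\<in>set ts. is_line n (Suc k) t \<and> inst t k = f \<and> (\<forall>x<k. c (inst t x) = c (inst t 0))) \<and>
          distinct (map (\<lambda>t. c (inst t 0)) ts))" by blast
    define U where "U = words n (Suc k)"
    define FS where "FS = (\<Pi>\<^sub>E u\<in>U. {..<r})"
    have finU: "finite U" unfolding U_def by (rule finite_words)
    have "finite FS" unfolding FS_def by (rule finite_PiE[OF finU]) auto
    then obtain e where e: "bij_betw e FS {0..<card FS}" using ex_bij_betw_finite_nat by blast
    obtain m where hm: "\<forall>c. (\<forall>w\<in>words m k. c w < card FS) \<longrightarrow>
      (\<exists>t. is_line m k t \<and> (\<forall>x<k. c (inst t x) = c (inst t 0)))"
      using IH unfolding HJ_prop_def by blast
    show ?case
    proof (rule exI[of _ "n + m"], intro allI impI)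
      fix c :: "nat list \<Rightarrow> nat"
      assume c: "\<forall>w\<in>words (n + m) (Suc k). c w < r"
      define c' where "c' v = e (restrict (\<lambda>u. c (u @ v)) U)" for v
      have inFS: "restrict (\<lambda>u. c (u @ v)) U \<in> FS" if "v \<in> words m k" for v
        unfolding FS_def using c that
        by (auto simp: U_def intro!: words_append words_mono[of v m k "Suc k"])
      have "\<forall>w\<in>words m k. c' w < card FS"
        using inFS e unfolding c'_def bij_betw_def by auto
      with hm obtain l where l: "is_line m k l" "\<forall>x<k. c' (inst l x) = c' (inst l 0)" by blast
      have same: "c (u @ inst l x) = c (u @ inst l 0)" if "x < k" "u \<in> U" for x u
      proof -
        have eq: "c' (inst l x) = c' (inst l 0)" using l(2) that(1) by blast
        have inj: "inj_on e FS" using e by (simp add: bij_betw_def)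
        have w1: "inst l x \<in> words m k" using inst_in_words[OF l(1) that(1)] .
        have w0: "inst l 0 \<in> words m k" using inst_in_words[OF l(1)] that(1) by simp
        have "restrict (\<lambda>u. c (u @ inst l x)) U = restrict (\<lambda>u. c (u @ inst l 0)) U"
          by (rule inj_onD[OF inj]) (use eq inFS[OF w1] inFS[OF w0] in \<open>simp_all add: c'_def\<close>)
        from fun_cong[OF this, of u] show ?thesis using that(2) by simp
      qed
      define c0 where "c0 u = c (u @ inst l 0)" for u
      have l0: "inst l 0 \<in> words m (Suc k)"
        using inst_in_words[OF l(1), of 0] k1 words_mono[of "inst l 0" m k "Suc k"] by simp
      have lk: "inst l k \<in> words m (Suc k)"
        using l(1) unfolding is_line_def words_def inst_def by (force split: option.splits)
      have "\<forall>u\<in>words n (Suc k). c0 u < r"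
        using c l0 unfolding c0_def by (auto intro: words_append)
      then have cases: "(\<exists>t. is_line n (Suc k) t \<and> (\<forall>x<Suc k. c0 (inst t x) = c0 (inst t 0))) \<or>
      (\<exists>f\<in>words n (Suc k). \<exists>ts. length ts = s \<and>
          (\<forall>t\<in>set ts. is_line n (Suc k) t \<and> inst t k = f \<and> (\<forall>x<k. c0 (inst t x) = c0 (inst t 0))) \<and>
          distinct (map (\<lambda>t. c0 (inst t 0)) ts))" using hn by blast
      have fromA: "\<exists>t. is_line (n + m) (Suc k) t \<and> (\<forall>x<Suc k. c (inst t x) = c (inst t 0))"
        if "is_line n (Suc k) t" "\<forall>x<Suc k. c0 (inst t x) = c0 (inst t 0)" for t
      proof (rule exI[of _ "t @ map Some (inst l 0)"], intro conjI)
        show "is_line (n + m) (Suc k) (t @ map Some (inst l 0))"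
          by (rule line_append_fixed[OF that(1) l0])
        show "\<forall>x<Suc k. c (inst (t @ map Some (inst l 0)) x) = c (inst (t @ map Some (inst l 0)) 0)"
        proof (intro allI impI)
          fix x assume "x < Suc k"
          then have "c0 (inst t x) = c0 (inst t 0)" using that(2) by blast
          then show "c (inst (t @ map Some (inst l 0)) x) = c (inst (t @ map Some (inst l 0)) 0)"
            unfolding c0_def by (simp add: inst_append inst_Some)
        qed
      qed
      show "(\<exists>t. is_line (n + m) (Suc k) t \<and> (\<forall>x<Suc k. c (inst t x) = c (inst t 0))) \<or>
      (\<exists>f\<in>words (n + m) (Suc k). \<exists>ts. length ts = Suc s \<and>
          (\<forall>t\<in>set ts. is_line (n + m) (Suc k) t \<and> inst t k = f \<and> (\<forall>x<k. c (inst t x) = c (inst t 0))) \<and>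
          distinct (map (\<lambda>t. c (inst t 0)) ts))"
      proof (cases "\<exists>t. is_line n (Suc k) t \<and> (\<forall>x<Suc k. c0 (inst t x) = c0 (inst t 0))")
        case True
        then show ?thesis using fromA by blast
      next
        case False
        with cases obtain f ts where f: "f \<in> words n (Suc k)" and ts: "length ts = s"
          "\<forall>t\<in>set ts. is_line n (Suc k) t \<and> inst t k = f \<and> (\<forall>x<k. c0 (inst t x) = c0 (inst t 0))"
          "distinct (map (\<lambda>t. c0 (inst t 0)) ts)" by blast
        show ?thesis
        proof (cases "c0 f \<in> set (map (\<lambda>t. c0 (inst t 0)) ts)")
          case True
          then obtain t where t: "t \<in> set ts" "c0 (inst t 0) = c0 f" by auto
          have "\<forall>x<Suc k. c0 (inst t x) = c0 (inst t 0)"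
          proof (intro allI impI)
            fix x assume "x < Suc k"
            then consider "x < k" | "x = k" by linarith
            then show "c0 (inst t x) = c0 (inst t 0)"
            proof cases
              case 1 then show ?thesis using ts(2) t(1) by blast
            next
              case 2 then show ?thesis using ts(2) t by metis
            qed
          qed
          then show ?thesis using fromA ts(2) t(1) by blast
        next
          case False
          define ts' where "ts' = map (\<lambda>t. t @ l) ts @ [map Some f @ l]"
          have col1: "c (inst (t @ l) 0) = c0 (inst t 0)" for t
            by (simp add: inst_append c0_def)
          have col2: "c (inst (map Some f @ l) 0) = c0 f"
            by (simp add: inst_append inst_Some c0_def)
          have "map (\<lambda>t. c (inst t 0)) ts' = map (\<lambda>t. c0 (inst t 0)) ts @ [c0 f]"
            unfolding ts'_def using col1 col2 by simp
          then have dist: "distinct (map (\<lambda>t. c (inst t 0)) ts')"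
            using ts(3) False by simp
          have lines: "\<forall>t\<in>set ts'. is_line (n + m) (Suc k) t \<and> inst t k = f @ inst l k \<and>
              (\<forall>x<k. c (inst t x) = c (inst t 0))"
          proof
            fix t' assume "t' \<in> set ts'"
            then consider t where "t \<in> set ts" "t' = t @ l" | "t' = map Some f @ l"
              unfolding ts'_def by auto
            then show "is_line (n + m) (Suc k) t' \<and> inst t' k = f @ inst l k \<and>
              (\<forall>x<k. c (inst t' x) = c (inst t' 0))"
            proof cases
              case 1
              have tl: "is_line n (Suc k) t" "inst t k = f" "\<forall>x<k. c0 (inst t x) = c0 (inst t 0)"
                using ts(2) 1(1) by blast+
              have iw: "inst t x \<in> U" if "x < k" for x
                using inst_in_words[OF tl(1)] that unfolding U_def by auto
              show ?thesis
              proof (intro conjI allI impI)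
                show "is_line (n + m) (Suc k) t'"
                  unfolding 1(2) by (rule line_append[OF tl(1) line_mono[OF l(1)]]) simp
                show "inst t' k = f @ inst l k" unfolding 1(2) by (simp add: inst_append tl(2))
                fix x assume x: "x < k"
                have "c (inst t' x) = c (inst t x @ inst l x)" unfolding 1(2) by (simp add: inst_append)
                also have "\<dots> = c0 (inst t x)" using same[OF x iw[OF x]] by (simp add: c0_def)
                also have "\<dots> = c0 (inst t 0)" using tl(3) x by blast
                also have "\<dots> = c (inst t' 0)" unfolding 1(2) by (simp add: inst_append c0_def)
                finally show "c (inst t' x) = c (inst t' 0)" .
              qed
            next
              case 2
              show ?thesis
              proof (intro conjI allI impI)
                show "is_line (n + m) (Suc k) t'"
                  unfolding 2 by (rule fixed_append_line[OF f line_mono[OF l(1)]]) simp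
                show "inst t' k = f @ inst l k" unfolding 2 by (simp add: inst_append inst_Some)
                fix x assume x: "x < k"
                have "c (inst t' x) = c (f @ inst l x)" unfolding 2 by (simp add: inst_append inst_Some)
                also have "\<dots> = c (f @ inst l 0)" using same[OF x] f by (simp add: U_def)
                also have "\<dots> = c (inst t' 0)" unfolding 2 by (simp add: inst_append inst_Some)
                finally show "c (inst t' x) = c (inst t' 0)" .
              qed
            qed
          qed
          have "f @ inst l k \<in> words (n + m) (Suc k)" by (rule words_append[OF f lk])
          moreover have "length ts' = Suc s" unfolding ts'_def using ts(1) by simp
          ultimately show ?thesis using lines dist by blast
        qed
      qed
    qed
  qed
  obtain n where hn: "\<forall>c. (\<forall>w\<in>words n (Suc k). c w < r) \<longrightarrow>
      (\<exists>t. is_line n (Suc k) t \<and> (\<forall>x<Suc k. c (inst t x) = c (inst t 0))) \<or>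
      (\<exists>f\<in>words n (Suc k). \<exists>ts. length ts = r \<and>
          (\<forall>t\<in>set ts. is_line n (Suc k) t \<and> inst t k = f \<and> (\<forall>x<k. c (inst t x) = c (inst t 0))) \<and>
          distinct (map (\<lambda>t. c (inst t 0)) ts))" using claim[of r] by blast
  show ?thesis unfolding HJ_prop_def
  proof (rule exI[of _ n], intro allI impI)
    fix c :: "nat list \<Rightarrow> nat"
    assume c: "\<forall>w\<in>words n (Suc k). c w < r"
    from hn[THEN spec, of c, THEN mp, OF c] show "\<exists>t. is_line n (Suc k) t \<and> (\<forall>x<Suc k. c (inst t x) = c (inst t 0))"
    proof
      assume "\<exists>f\<in>words n (Suc k). \<exists>ts. length ts = r \<and>
          (\<forall>t\<in>set ts. is_line n (Suc k) t \<and> inst t k = f \<and> (\<forall>x<k. c (inst t x) = c (inst t 0))) \<and>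
          distinct (map (\<lambda>t. c (inst t 0)) ts)"
      then obtain f ts where f: "f \<in> words n (Suc k)" and ts: "length ts = r"
          "\<forall>t\<in>set ts. is_line n (Suc k) t \<and> inst t k = f \<and> (\<forall>x<k. c (inst t x) = c (inst t 0))"
          "distinct (map (\<lambda>t. c (inst t 0)) ts)" by blast
      let ?C = "set (map (\<lambda>t. c (inst t 0)) ts)"
      have sub: "?C \<subseteq> {..<r}"
        using ts(2) c inst_in_words by (auto)
      have "card ?C = r" using distinct_card[OF ts(3)] ts(1) by simp
      then have "?C = {..<r}" using sub by (simp add: card_subset_eq)
      moreover have "c f < r" using c f by auto
      ultimately have "c f \<in> (\<lambda>t. c (inst t 0)) ` set ts" by simp
      then obtain t where t: "t \<in> set ts" "c (inst t 0) = c f" by (auto simp del: set_map)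
      show ?thesis
      proof (intro exI conjI allI impI)
        show "is_line n (Suc k) t" using ts(2) t(1) by blast
        fix x assume "x < Suc k"
        then consider "x < k" | "x = k" by linarith
        then show "c (inst t x) = c (inst t 0)"
        proof cases
          case 1 then show ?thesis using ts(2) t(1) by blast
        next
          case 2 then show ?thesis using ts(2) t by metis
        qed
      qed
    qed
  qed
qed

lemma HJ:
  assumes "k \<ge> 1"
  shows "HJ_prop k r"
  using assms
proof (induction k arbitrary: r rule: nat_induct_at_least)
  case base
  show ?case unfolding HJ_prop_def
    by (rule exI[of _ 1]) (auto intro!: exI[of _ "[None]"] simp: is_line_def)
next
  case (Suc k)
  then show ?case using HJ_step by blast
qed

section \<open>Basic partial semigroup facts\<close>

lemma ps_assoc:
  assumes "partial_semigroup op"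
  shows "Option.bind (op x y) (\<lambda>u. op u z) = Option.bind (op y z) (op x)"
  using assms unfolding partial_semigroup_def by (metis (no_types))

lemma ps_SS:
  assumes "partial_semigroup op" "op x y = Some u" "op y z = Some v"
  shows "op u z = op x v"
  using ps_assoc[OF assms(1), of x y z] assms(2,3) by simp

lemma ps_S1:
  assumes "partial_semigroup op" "op x y = Some u" "op u z = Some w"
  shows "\<exists>v. op y z = Some v \<and> op x v = Some w"
proof -
  have "Option.bind (op y z) (op x) = Some w"
    using ps_assoc[OF assms(1), of x y z] assms(2,3) by simp
  then show ?thesis by (cases "op y z") auto
qed

lemma ps_rcomm:
  assumes "partial_semigroup op" "commutative_ps op" "op x y = Some d"
  shows "op d z = Option.bind (op x z) (\<lambda>u. op u y)"
proof -
  have c: "op a b = op b a" for a b using assms(2) unfolding commutative_ps_def by blast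
  have "op d z = Option.bind (op x y) (\<lambda>u. op u z)" using assms(3) by simp
  also have "\<dots> = Option.bind (op y z) (op x)" by (rule ps_assoc[OF assms(1)])
  also have "\<dots> = Option.bind (op z y) (op x)" by (simp add: c)
  also have "\<dots> = Option.bind (op x z) (\<lambda>u. op u y)" by (rule ps_assoc[OF assms(1), symmetric])
  finally show ?thesis .
qed

section \<open>List products\<close>

lemma plprod_Cons: "xs \<noteq> [] \<Longrightarrow> plprod op (x # xs) = Option.bind (plprod op xs) (op x)"
  by (cases xs) auto

lemma plprod_single: "plprod op [x] = Some x" by simp

lemma plprod_swap:
  assumes "partial_semigroup op" "commutative_ps op"
  shows "plprod op (x # y # zs) = plprod op (y # x # zs)"
proof (cases "zs = []")
  case True
  then show ?thesis using assms(2) unfolding commutative_ps_def by simp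
next
  case False
  have key: "Option.bind (op y z) (op x) = Option.bind (op x z) (op y)" for z
  proof -
    have "Option.bind (op y z) (op x) = Option.bind (op x y) (\<lambda>u. op u z)"
      by (rule ps_assoc[OF assms(1), symmetric])
    also have "\<dots> = Option.bind (op y x) (\<lambda>u. op u z)"
      using assms(2) unfolding commutative_ps_def by metis
    also have "\<dots> = Option.bind (op x z) (op y)" by (rule ps_assoc[OF assms(1)])
    finally show ?thesis .
  qed
  show ?thesis using False key
    by (cases "plprod op zs") (simp_all add: plprod_Cons)
qed

lemma plprod_cons_cong:
  "xs \<noteq> [] \<Longrightarrow> ys \<noteq> [] \<Longrightarrow> plprod op xs = plprod op ys \<Longrightarrow> plprod op (z # xs) = plprod op (z # ys)"
  by (simp add: plprod_Cons)

lemma plprod_move: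
  assumes "partial_semigroup op" "commutative_ps op"
  shows "plprod op (ys1 @ x # ys2) = plprod op (x # ys1 @ ys2)"
proof (induction ys1)
  case Nil
  then show ?case by simp
next
  case (Cons y ys1)
  have "plprod op (y # (ys1 @ x # ys2)) = plprod op (y # x # ys1 @ ys2)"
    by (rule plprod_cons_cong) (use Cons.IH in auto)
  also have "\<dots> = plprod op (x # y # ys1 @ ys2)" by (rule plprod_swap[OF assms])
  finally show ?case by simp
qed

lemma plprod_perm:
  assumes "partial_semigroup op" "commutative_ps op"
  shows "mset xs = mset ys \<Longrightarrow> plprod op xs = plprod op ys"
proof (induction xs arbitrary: ys)
  case Nil
  then show ?case by simp
next
  case (Cons x xs)
  have "x \<in> set ys" using Cons.prems by (metis list.set_intros(1) set_mset_mset)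
  then obtain ys1 ys2 where ys: "ys = ys1 @ x # ys2" by (metis split_list)
  have m: "mset xs = mset (ys1 @ ys2)" using Cons.prems ys by simp
  have IH: "plprod op xs = plprod op (ys1 @ ys2)" using Cons.IH m by blast
  have "plprod op (x # xs) = plprod op (x # ys1 @ ys2)"
  proof (cases "xs = []")
    case True
    then have "ys1 @ ys2 = []" using m by simp
    then show ?thesis using True by simp
  next
    case False
    then have "ys1 @ ys2 \<noteq> []" using m by auto
    then show ?thesis using False IH by (intro plprod_cons_cong) auto
  qed
  also have "\<dots> = plprod op ys" using plprod_move[OF assms] ys by simp
  finally show ?case .
qed

lemma plprod_append:
  assumes "partial_semigroup op"
  shows "xs \<noteq> [] \<Longrightarrow> ys \<noteq> [] \<Longrightarrow>
    plprod op (xs @ ys) = Option.bind (plprod op xs) (\<lambda>u. Option.bind (plprod op ys) (op u))"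
proof (induction xs)
  case Nil
  then show ?case by simp
next
  case (Cons x xs)
  show ?case
  proof (cases "xs = []")
    case True
    then show ?thesis using Cons.prems by (simp add: plprod_Cons)
  next
    case False
    have "plprod op ((x # xs) @ ys) = Option.bind (plprod op (xs @ ys)) (op x)"
      using Cons.prems by (simp add: plprod_Cons)
    also have "\<dots> = Option.bind (Option.bind (plprod op xs) (\<lambda>u. Option.bind (plprod op ys) (op u))) (op x)"
      using Cons.IH False Cons.prems by simp
    also have "\<dots> = Option.bind (Option.bind (plprod op xs) (op x)) (\<lambda>u. Option.bind (plprod op ys) (op u))"
    proof (cases "plprod op xs")
      case None then show ?thesis by simp
    next
      case (Some p)
      show ?thesis
      proof (cases "plprod op ys")
        case None then show ?thesis using Some by (cases "op x p") simp_all
      next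
        case (Some q)
        then show ?thesis using \<open>plprod op xs = Some p\<close> ps_assoc[OF assms, of x p q] by simp
      qed
    qed
    also have "\<dots> = Option.bind (plprod op (x # xs)) (\<lambda>u. Option.bind (plprod op ys) (op u))"
      using False by (simp add: plprod_Cons)
    finally show ?thesis .
  qed
qed

lemma plprod_snoc:
  assumes "partial_semigroup op" "xs \<noteq> []"
  shows "plprod op (xs @ [y]) = Option.bind (plprod op xs) (\<lambda>u. op u y)"
  using plprod_append[OF assms(1) assms(2), of "[y]"] by simp

lemma sigmaS_iff: "t \<in> sigmaS op W \<longleftrightarrow> (\<forall>s\<in>W. op s t \<noteq> None)"
  by (simp add: sigmaS_def phiS_def)

lemma sigmaS_anti: "W1 \<subseteq> W2 \<Longrightarrow> sigmaS op W2 \<subseteq> sigmaS op W1"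
  unfolding sigmaS_def by blast

lemma rmult_set_mono: "W1 \<subseteq> W2 \<Longrightarrow> rmult_set op W1 a \<subseteq> rmult_set op W2 a"
  by (auto simp: rmult_set_def)

lemma finite_rmult_set: "finite W \<Longrightarrow> finite (rmult_set op W a)"
proof -
  assume "finite W"
  have "rmult_set op W a \<subseteq> (\<lambda>w. the (op w a)) ` W" by (force simp: rmult_set_def)
  then show ?thesis using \<open>finite W\<close> finite_subset by blast
qed

lemma words_Suc: "w \<in> words (Suc n) k \<Longrightarrow> \<exists>w' j. w = w' @ [j] \<and> w' \<in> words n k \<and> j < k"
proof -
  assume w: "w \<in> words (Suc n) k"
  then have "w \<noteq> []" by (auto simp: words_def)
  then have "w = butlast w @ [last w]" by simp
  moreover have "butlast w \<in> words n k" using w by (auto simp: words_def dest: in_set_butlastD)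
  moreover have "last w < k" using w \<open>w \<noteq> []\<close> last_in_set[of w] unfolding words_def by blast
  ultimately show ?thesis by blast
qed

definition terms :: "(nat \<Rightarrow> 'a) list \<Rightarrow> nat list \<Rightarrow> nat list \<Rightarrow> 'a list" where
  "terms fs ix w = map (\<lambda>(j,i). (fs!j) i) (zip w ix)"

lemma terms_snoc: "length w = length ix \<Longrightarrow> terms fs (ix @ [i]) (w @ [j]) = terms fs ix w @ [(fs!j) i]"
  by (simp add: terms_def)

lemma terms_nth: "length w = length ix \<Longrightarrow> terms fs ix w = map (\<lambda>c. (fs!(w!c)) (ix!c)) [0..<length w]"
  by (rule nth_equalityI) (simp_all add: terms_def)

lemma inst_nth: "i < length t \<Longrightarrow> inst t x ! i = (case t!i of None \<Rightarrow> x | Some a \<Rightarrow> a)"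
  by (simp add: inst_def)

lemma mset_map_filter_split:
  "mset (map g xs) = mset (map g (filter (\<lambda>x. \<not> P x) xs)) + mset (map g (filter P xs))"
  by (induct xs) (auto simp: add_ac)

lemma index_exists:
  assumes ps: "partial_semigroup op" and fsTS: "set fs \<subseteq> TS op" and k: "length fs = k" "k \<ge> 1"
    and W: "finite W" "W \<noteq> {}" and a: "a \<in> sigmaS op W"
  shows "\<exists>ix. length ix = n \<and> sorted_wrt (<) ix \<and>
           (\<forall>w0\<in>W. \<forall>w\<in>words n k. plprod op (w0 # a # terms fs ix w) \<noteq> None)"
proof (induction n)
  case 0
  show ?case
  proof (intro exI[of _ "[]"] conjI ballI)
    fix w0 w assume "w0 \<in> W" "w \<in> words 0 k"
    then have "w = []" by (simp add: words_def)
    then show "plprod op (w0 # a # terms fs [] w) \<noteq> None"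
      using a \<open>w0 \<in> W\<close> by (simp add: terms_def sigmaS_iff)
  qed simp_all
next
  case (Suc n)
  then obtain ix where ix: "length ix = n" "sorted_wrt (<) ix"
    "\<forall>w0\<in>W. \<forall>w\<in>words n k. plprod op (w0 # a # terms fs ix w) \<noteq> None" by blast
  define R where "R = {u. \<exists>w0\<in>W. \<exists>w\<in>words n k. plprod op (w0 # a # terms fs ix w) = Some u}"
  have finR: "finite R"
  proof -
    have "R \<subseteq> (\<lambda>(w0,w). the (plprod op (w0 # a # terms fs ix w))) ` (W \<times> words n k)"
      unfolding R_def by force
    moreover have "finite (W \<times> words n k)" using W(1) finite_words by blast
    ultimately show ?thesis using finite_subset by blast
  qed
  have neR: "R \<noteq> {}"
  proof -
    obtain w0 where w0: "w0 \<in> W" using W(2) by blast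
    moreover have rw: "replicate n 0 \<in> words n k" using k by (cases n) (auto simp: words_def)
    ultimately obtain u where "plprod op (w0 # a # terms fs ix (replicate n 0)) = Some u"
      using ix(3) by blast
    then show ?thesis unfolding R_def using w0 rw by blast
  qed
  have "\<forall>j<k. \<exists>m. \<forall>F. finite F \<and> F \<noteq> {} \<and> Min F \<ge> m \<longrightarrow>
          (\<exists>v. seqprod op (fs!j) F = Some v \<and> v \<in> sigmaS op R)"
  proof (intro allI impI)
    fix j assume "j < k"
    then have "fs!j \<in> TS op" using fsTS k nth_mem by blast
    then show "\<exists>m. \<forall>F. finite F \<and> F \<noteq> {} \<and> Min F \<ge> m \<longrightarrow>
          (\<exists>v. seqprod op (fs!j) F = Some v \<and> v \<in> sigmaS op R)"
      using finR neR unfolding TS_def adequate_seq_def by blast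
  qed
  then obtain M where M: "\<forall>j<k. \<forall>F. finite F \<and> F \<noteq> {} \<and> Min F \<ge> M j \<longrightarrow>
          (\<exists>v. seqprod op (fs!j) F = Some v \<and> v \<in> sigmaS op R)" by metis
  define i where "i = Suc (sum_list ix) + (\<Sum>j<k. M j)"
  have Mi: "M j \<le> i" if "j < k" for j
  proof -
    have "M j \<le> (\<Sum>j<k. M j)" using that by (intro member_le_sum) auto
    then show ?thesis unfolding i_def by linarith
  qed
  have good: "(fs!j) i \<in> sigmaS op R" if "j < k" for j
  proof -
    have "\<exists>v. seqprod op (fs!j) {i} = Some v \<and> v \<in> sigmaS op R"
      using M that Mi[OF that] by simp
    then show ?thesis by (simp add: seqprod_def)
  qed
  have gt: "x < i" if "x \<in> set ix" for x
    using member_le_sum_list[OF that] unfolding i_def by linarith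
  show ?case
  proof (intro exI[of _ "ix @ [i]"] conjI ballI)
    show "length (ix @ [i]) = Suc n" using ix(1) by simp
    show "sorted_wrt (<) (ix @ [i])" using ix(2) gt by (simp add: sorted_wrt_append)
    fix w0 w assume w0: "w0 \<in> W" and w: "w \<in> words (Suc n) k"
    obtain w' j where wj: "w = w' @ [j]" "w' \<in> words n k" "j < k" using words_Suc[OF w] by blast
    have lw': "length w' = length ix" using wj(2) ix(1) by (simp add: words_def)
    obtain u where u: "plprod op (w0 # a # terms fs ix w') = Some u" using ix(3) w0 wj(2) by blast
    have uR: "u \<in> R" unfolding R_def using w0 wj(2) u by blast
    have "plprod op (w0 # a # terms fs (ix @ [i]) w) = plprod op ((w0 # a # terms fs ix w') @ [(fs!j) i])"
      using wj(1) lw' by (simp add: terms_snoc)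
    also have "\<dots> = op u ((fs!j) i)" using plprod_snoc[OF ps, of "w0 # a # terms fs ix w'"] u by (simp del: plprod.simps)
    finally have eq: "plprod op (w0 # a # terms fs (ix @ [i]) w) = op u ((fs!j) i)" .
    have nn: "op u ((fs!j) i) \<noteq> None" using good[OF wj(3)] uR unfolding sigmaS_iff by blast
    show "plprod op (w0 # a # terms fs (ix @ [i]) w) \<noteq> None" using eq nn by metis
  qed
qed

lemma gallai:
  assumes ps: "partial_semigroup op" and cm: "commutative_ps op" and ad: "adequate op"
    and F: "finite F" "F \<noteq> {}" "F \<subseteq> TS op" and W: "finite W" "W \<noteq> {}"
    and c: "\<forall>s. c s < (r::nat)"
  shows "\<exists>a\<in>sigmaS op W. \<exists>H. finite H \<and> H \<noteq> {} \<and> (\<exists>col. \<forall>f\<in>F. \<exists>v. seqprod op f H = Some v \<and>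
           v \<in> sigmaS op (rmult_set op W a) \<and> (\<exists>u. op a v = Some u \<and> c u = col))"
proof -
  obtain fs where fs: "set fs = F" "distinct fs" using finite_distinct_list[OF F(1)] by blast
  define k where "k = length fs"
  have k1: "k \<ge> 1" using fs F(2) unfolding k_def by (cases fs) auto
  obtain N where HN: "\<forall>C. (\<forall>w\<in>words N k. C w < r) \<longrightarrow>
      (\<exists>t. is_line N k t \<and> (\<forall>x<k. C (inst t x) = C (inst t 0)))"
    using HJ[OF k1, of r] unfolding HJ_prop_def by blast
  obtain a where a: "a \<in> sigmaS op W" using ad W unfolding adequate_def by blast
  obtain ix where ix: "length ix = N" "sorted_wrt (<) ix"
      "\<forall>w0\<in>W. \<forall>w\<in>words N k. plprod op (w0 # a # terms fs ix w) \<noteq> None"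
    using index_exists[OF ps _ k_def[symmetric] k1 W a, of N] fs F(3) by auto
  define C where "C w = c (the (plprod op (a # terms fs ix w)))" for w
  have "\<forall>w\<in>words N k. C w < r" using c unfolding C_def by blast
  then obtain t where t: "is_line N k t" "\<forall>x<k. C (inst t x) = C (inst t 0)"
    using HN by blast
  define Vs where "Vs = filter (\<lambda>i. t!i = None) [0..<N]"
  define Bs where "Bs = filter (\<lambda>i. \<not> t!i = None) [0..<N]"
  define B where "B = map (\<lambda>i. (fs ! the (t!i)) (ix!i)) Bs"
  define Vl where "Vl j = map (\<lambda>i. (fs!j) (ix!i)) Vs" for j
  define H where "H = set (map ((!) ix) Vs)"
  have lt: "length t = N" using t(1) by (simp add: is_line_def)
  have Vs_ne: "Vs \<noteq> []"
  proof -
    have "None \<in> set t" using t(1) by (simp add: is_line_def)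
    then obtain i where "i < N" "t!i = None" using lt by (metis in_set_conv_nth)
    then show ?thesis unfolding Vs_def by (auto simp: filter_empty_conv)
  qed
  have sortedH: "sorted_list_of_set H = map ((!) ix) Vs"
  proof -
    have sV: "sorted_wrt (<) Vs" unfolding Vs_def by (simp add: sorted_wrt_filter)
    have "sorted_wrt (\<lambda>x y. ix!x < ix!y) Vs"
    proof (rule sorted_wrt_mono_rel[OF _ sV])
      fix x y assume "x \<in> set Vs" "y \<in> set Vs" "x < y"
      then show "ix!x < ix!y" using sorted_wrt_nth_less[OF ix(2)] ix(1) unfolding Vs_def by auto
    qed
    then have "sorted_wrt (<) (map ((!) ix) Vs)" by (simp add: sorted_wrt_map)
    then have "sorted (map ((!) ix) Vs)" "distinct (map ((!) ix) Vs)" by (simp_all add: strict_sorted_iff)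
    then show ?thesis unfolding H_def
      by (metis sorted_list_of_set_sort_remdups distinct_remdups_id sorted_sort_id)
  qed
  have seqH: "seqprod op (fs!j) H = plprod op (Vl j)" for j
    unfolding seqprod_def sortedH Vl_def by (simp add: comp_def)
  have mset_eq: "mset (terms fs ix (inst t j)) = mset B + mset (Vl j)" for j
  proof -
    define g where "g i = (fs ! (inst t j ! i)) (ix!i)" for i
    have "terms fs ix (inst t j) = map g [0..<N]"
      using terms_nth[of "inst t j" ix fs] lt ix(1) unfolding g_def by simp
    then have "mset (terms fs ix (inst t j)) = mset (map g Bs) + mset (map g Vs)"
      using mset_map_filter_split[of g "[0..<N]" "\<lambda>i. t!i = None"] unfolding Bs_def Vs_def by simp
    moreover have "map g Bs = B" unfolding B_def Bs_def
      by (rule map_cong) (auto simp: g_def inst_nth lt split: option.splits)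
    moreover have "map g Vs = Vl j" unfolding Vl_def Vs_def
      by (rule map_cong) (auto simp: g_def inst_nth lt split: option.splits)
    ultimately show ?thesis by simp
  qed
  have Vlne: "Vl j \<noteq> []" for j using Vs_ne by (simp add: Vl_def)
  have main: "\<exists>a' v u. plprod op (a # B) = Some a' \<and> plprod op (Vl j) = Some v \<and> op a' v = Some u \<and>
      C (inst t j) = c u \<and> (\<forall>w0\<in>W. \<exists>y. op w0 a' = Some y \<and> op y v \<noteq> None)" if j: "j < k" for j
  proof -
    have wj: "inst t j \<in> words N k" using inst_in_words[OF t(1) j] .
    obtain w0 where w0: "w0 \<in> W" using W(2) by blast
    have perm1: "plprod op (a # terms fs ix (inst t j)) = plprod op ((a # B) @ Vl j)"
      by (rule plprod_perm[OF ps cm]) (simp add: mset_eq)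
    have perm2: "plprod op (w0' # a # terms fs ix (inst t j)) = plprod op ((w0' # a # B) @ Vl j)" for w0'
      by (rule plprod_perm[OF ps cm]) (simp add: mset_eq)
    have "plprod op (w0 # a # terms fs ix (inst t j)) \<noteq> None" using ix(3) w0 wj by blast
    then have "plprod op (a # terms fs ix (inst t j)) \<noteq> None"
      using plprod_Cons[of "a # terms fs ix (inst t j)" op w0] by (cases "plprod op (a # terms fs ix (inst t j))") (simp_all del: plprod.simps)
    then obtain u where u: "plprod op (a # terms fs ix (inst t j)) = Some u" by blast
    then have "Option.bind (plprod op (a # B)) (\<lambda>x. Option.bind (plprod op (Vl j)) (op x)) = Some u"
      using perm1 plprod_append[OF ps _ Vlne, of "a # B" j] by (simp del: plprod.simps)
    then obtain a' v where av: "plprod op (a # B) = Some a'" "plprod op (Vl j) = Some v" "op a' v = Some u"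
      by (cases "plprod op (a # B)"; cases "plprod op (Vl j)") auto
    have "\<forall>w0\<in>W. \<exists>y. op w0 a' = Some y \<and> op y v \<noteq> None"
    proof
      fix w0' assume w0': "w0' \<in> W"
      have "plprod op (w0' # a # terms fs ix (inst t j)) \<noteq> None" using ix(3) w0' wj by blast
      then have "Option.bind (plprod op (w0' # a # B)) (\<lambda>x. Option.bind (plprod op (Vl j)) (op x)) \<noteq> None"
        using perm2[of w0'] plprod_append[OF ps _ Vlne, of "w0' # a # B" j] by (simp del: plprod.simps)
      moreover have "plprod op (w0' # a # B) = op w0' a'"
        using av(1) by (simp del: plprod.simps add: plprod_Cons)
      ultimately show "\<exists>y. op w0' a' = Some y \<and> op y v \<noteq> None"
        using av(2) by (cases "op w0' a'") (simp_all del: plprod.simps)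
    qed
    moreover have "C (inst t j) = c u" unfolding C_def using u by simp
    ultimately show ?thesis using av by blast
  qed
  obtain a' where a': "plprod op (a # B) = Some a'" using main[of 0] k1 by auto
  have a'W: "a' \<in> sigmaS op W" using main[of 0] k1 a' unfolding sigmaS_iff by fastforce
  show ?thesis
  proof (rule bexI[OF _ a'W], rule exI[of _ H], intro conjI)
    show "finite H" by (simp add: H_def)
    show "H \<noteq> {}" using Vs_ne by (simp add: H_def)
    show "\<exists>col. \<forall>f\<in>F. \<exists>v. seqprod op f H = Some v \<and> v \<in> sigmaS op (rmult_set op W a') \<and>
        (\<exists>u. op a' v = Some u \<and> c u = col)"
    proof (rule exI[of _ "C (inst t 0)"], intro ballI)
      fix f assume "f \<in> F"
      then obtain j where j: "j < k" "f = fs!j" using fs(1) unfolding k_def by (metis in_set_conv_nth)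
      obtain a'' v u where m: "plprod op (a # B) = Some a''" "plprod op (Vl j) = Some v" "op a'' v = Some u"
          "C (inst t j) = c u" "\<forall>w0\<in>W. \<exists>y. op w0 a'' = Some y \<and> op y v \<noteq> None"
        using main[OF j(1)] by blast
      have aa: "a'' = a'" using m(1) a' by simp
      show "\<exists>v. seqprod op f H = Some v \<and> v \<in> sigmaS op (rmult_set op W a') \<and>
          (\<exists>u. op a' v = Some u \<and> c u = C (inst t 0))"
      proof (intro exI conjI)
        show "seqprod op f H = Some v" using seqH m(2) j(2) by simp
        show "v \<in> sigmaS op (rmult_set op W a')"
          using m(5) aa unfolding sigmaS_iff rmult_set_def by fastforce
        show "op a' v = Some u" using m(3) aa by simp
        show "c u = C (inst t 0)" using m(4) t(2) j(1) by metis
      qed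
    qed
  qed
qed

section \<open>Ultrafilter existence\<close>

definition fip :: "'a set set \<Rightarrow> bool" where
  "fip P \<longleftrightarrow> (\<forall>\<F>. finite \<F> \<and> \<F> \<noteq> {} \<and> \<F> \<subseteq> P \<longrightarrow> \<Inter>\<F> \<noteq> {})"

lemma ultrafilter_exists:
  assumes "fip G"
  shows "\<exists>p. ultrafilter_on p \<and> G \<subseteq> p"
proof -
  define A where "A = {P. G \<subseteq> P \<and> fip P}"
  have "\<forall>C\<in>chains A. \<exists>U\<in>A. \<forall>X\<in>C. X \<subseteq> U"
  proof
    fix C assume C: "C \<in> chains A"
    show "\<exists>U\<in>A. \<forall>X\<in>C. X \<subseteq> U"
    proof (cases "C = {}")
      case True then show ?thesis using assms unfolding A_def by auto
    next
      case False
      have sc: "subset.chain A C" using C by (simp add: chains_alt_def)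
      have CA: "C \<subseteq> A" using C unfolding chains_def by blast
      have "\<Union>C \<in> A" unfolding A_def
      proof (intro CollectI conjI)
        show "G \<subseteq> \<Union>C" using False CA unfolding A_def by auto
        show "fip (\<Union>C)" unfolding fip_def
        proof (intro allI impI)
          fix \<F> assume F: "finite \<F> \<and> \<F> \<noteq> {} \<and> \<F> \<subseteq> \<Union>C"
          obtain X where X: "X \<in> C" "\<F> \<subseteq> X"
            using finite_subset_Union_chain[of \<F> C A] F False sc by blast
          then have "fip X" using CA unfolding A_def by auto
          then show "\<Inter>\<F> \<noteq> {}" using F X(2) unfolding fip_def by blast
        qed
      qed
      then show ?thesis by blast
    qed
  qed
  then obtain M where M: "M \<in> A" "\<forall>X\<in>A. M \<subseteq> X \<longrightarrow> X = M" using Zorn_Lemma2[of A] by blast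
  have GM: "G \<subseteq> M" and fM: "fip M" using M(1) unfolding A_def by auto
  have add: "S \<in> M" if "fip (insert S M)" for S
  proof -
    have "insert S M \<in> A" using that GM unfolding A_def by auto
    then have "insert S M = M" using M(2) by blast
    then show ?thesis by blast
  qed
  have fipD: "\<Inter>\<F> \<noteq> {}" if "finite \<F>" "\<F> \<noteq> {}" "\<F> \<subseteq> M" for \<F>
    using fM that unfolding fip_def by blast
  have key: "S \<in> M \<or> -S \<in> M" for S
  proof (rule ccontr)
    assume "\<not> (S \<in> M \<or> -S \<in> M)"
    then have "\<not> fip (insert S M)" "\<not> fip (insert (-S) M)" using add by blast+
    then obtain F1 F2 where f1: "finite F1" "F1 \<noteq> {}" "F1 \<subseteq> insert S M" "\<Inter>F1 = {}"
      and f2: "finite F2" "F2 \<noteq> {}" "F2 \<subseteq> insert (-S) M" "\<Inter>F2 = {}" unfolding fip_def by blast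
    define FF where "FF = (F1 - {S}) \<union> (F2 - {-S})"
    have FM: "FF \<subseteq> M" "finite FF" using f1 f2 unfolding FF_def by auto
    have "\<Inter>(insert S FF) \<subseteq> \<Inter>F1" using f1(3) unfolding FF_def by blast
    moreover have "\<Inter>(insert (-S) FF) \<subseteq> \<Inter>F2" using f2(3) unfolding FF_def by blast
    ultimately have "\<Inter>FF = {}" using f1(4) f2(4) by auto
    then show False
      using fipD[OF FM(2) _ FM(1)] by (cases "FF = {}") auto
  qed
  have nE: "{} \<notin> M" using fipD[of "{{}}"] by auto
  have "ultrafilter_on M" unfolding ultrafilter_on_def
  proof (intro conjI allI impI)
    show "UNIV \<in> M" using key[of UNIV] nE by auto
    show "{} \<notin> M" by (rule nE)
    fix X Y
    show "X \<in> M \<or> - X \<in> M" by (rule key)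
  next
    fix X Y assume XY: "X \<in> M \<and> X \<subseteq> Y"
    show "Y \<in> M"
    proof (rule ccontr)
      assume "Y \<notin> M"
      then have "-Y \<in> M" using key by blast
      then show False using fipD[of "{X, -Y}"] XY by auto
    qed
  next
    fix X Y assume XY: "X \<in> M \<and> Y \<in> M"
    show "X \<inter> Y \<in> M"
    proof (rule ccontr)
      assume "X \<inter> Y \<notin> M"
      then have "-(X \<inter> Y) \<in> M" using key by blast
      then show False using fipD[of "{X, Y, -(X \<inter> Y)}"] XY by auto
    qed
  qed
  then show ?thesis using GM by blast
qed

lemma uf_univ: "ultrafilter_on p \<Longrightarrow> UNIV \<in> p" by (simp add: ultrafilter_on_def)
lemma uf_empty: "ultrafilter_on p \<Longrightarrow> {} \<notin> p" by (simp add: ultrafilter_on_def)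
lemma uf_mono: "ultrafilter_on p \<Longrightarrow> A \<in> p \<Longrightarrow> A \<subseteq> B \<Longrightarrow> B \<in> p"
  unfolding ultrafilter_on_def by blast
lemma uf_int: "ultrafilter_on p \<Longrightarrow> A \<in> p \<Longrightarrow> B \<in> p \<Longrightarrow> A \<inter> B \<in> p"
  unfolding ultrafilter_on_def by blast
lemma uf_compl: "ultrafilter_on p \<Longrightarrow> A \<in> p \<or> -A \<in> p"
  unfolding ultrafilter_on_def by blast
lemma uf_ne: "ultrafilter_on p \<Longrightarrow> A \<in> p \<Longrightarrow> \<exists>x. x \<in> A"
  using uf_empty[of p] by (cases "A = {}") auto

lemma uf_Inter: assumes "ultrafilter_on p" shows "finite \<A> \<Longrightarrow> \<A> \<subseteq> p \<Longrightarrow> \<Inter>\<A> \<in> p"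
proof (induction \<A> rule: finite_induct)
  case empty then show ?case using assms by (simp add: uf_univ)
next
  case (insert A \<A>) then show ?case using assms uf_int[of p A "\<Inter>\<A>"] by simp
qed

lemma delta_uf: "p \<in> deltaS op \<Longrightarrow> ultrafilter_on p"
  by (simp add: deltaS_def betaS_def)

lemma sigma_in_delta: "p \<in> deltaS op \<Longrightarrow> finite K \<Longrightarrow> sigmaS op K \<in> p"
  unfolding sigmaS_def
  by (rule uf_Inter[OF delta_uf]) (auto simp: deltaS_def)

section \<open>Products of ultrafilters\<close>

lemma linv_int: "linv op s (A \<inter> B) = linv op s A \<inter> linv op s B"
  by (auto simp: linv_def)

lemma linv_mono: "A \<subseteq> B \<Longrightarrow> linv op s A \<subseteq> linv op s B"
  by (auto simp: linv_def)

lemma linv_compl: "linv op s (-A) = phiS op s - linv op s A"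
  by (auto simp: linv_def phiS_def)

lemma linv_phi:
  assumes ps: "partial_semigroup op" and xs: "op x s = Some y"
  shows "linv op s (phiS op x) = phiS op s \<inter> phiS op y"
proof -
  have eq: "op y t = Option.bind (op s t) (op x)" for t
    using ps_assoc[OF ps, of x s t] xs by simp
  show ?thesis
  proof (intro set_eqI iffI)
    fix t assume "t \<in> linv op s (phiS op x)"
    then show "t \<in> phiS op s \<inter> phiS op y" using eq[of t] by (auto simp: linv_def phiS_def)
  next
    fix t assume "t \<in> phiS op s \<inter> phiS op y"
    then show "t \<in> linv op s (phiS op x)" using eq[of t]
      by (cases "op s t") (auto simp: linv_def phiS_def)
  qed
qed

lemma mult_ultra:
  assumes p: "ultrafilter_on p" and q: "q \<in> deltaS op"
  shows "ultrafilter_on (ult_mult op p q)"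
proof -
  have uq: "ultrafilter_on q" using q by (rule delta_uf)
  define Q where "Q A = {s. linv op s A \<in> q}" for A
  have m: "A \<in> ult_mult op p q \<longleftrightarrow> Q A \<in> p" for A by (simp add: ult_mult_def Q_def)
  have QU: "Q UNIV = UNIV"
  proof -
    have "linv op s UNIV = phiS op s" for s by (auto simp: linv_def phiS_def)
    then show ?thesis using q unfolding Q_def deltaS_def by auto
  qed
  have le: "linv op s {} = {}" for s by (simp add: linv_def)
  have QE: "Q {} = {}" using uf_empty[OF uq] unfolding Q_def le by simp
  have Qmono: "Q A \<subseteq> Q B" if AB: "A \<subseteq> B" for A B
  proof
    fix s assume "s \<in> Q A"
    then have "linv op s A \<in> q" by (simp add: Q_def)
    then have "linv op s B \<in> q" by (rule uf_mono[OF uq _ linv_mono[OF AB]])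
    then show "s \<in> Q B" by (simp add: Q_def)
  qed
  have Qint: "Q A \<inter> Q B \<subseteq> Q (A \<inter> B)" for A B
  proof
    fix s assume "s \<in> Q A \<inter> Q B"
    then have "linv op s A \<in> q" "linv op s B \<in> q" by (simp_all add: Q_def)
    then have "linv op s A \<inter> linv op s B \<in> q" by (rule uf_int[OF uq])
    then show "s \<in> Q (A \<inter> B)" by (simp add: Q_def linv_int)
  qed
  have Qcompl: "Q A \<union> Q (-A) = UNIV" for A
  proof -
    have "s \<in> Q A \<or> s \<in> Q (-A)" for s
    proof (cases "linv op s A \<in> q")
      case True then show ?thesis by (simp add: Q_def)
    next
      case False
      then have "-linv op s A \<in> q" using uf_compl[OF uq] by blast
      moreover have "phiS op s \<in> q" using q by (simp add: deltaS_def)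
      ultimately have "phiS op s \<inter> -linv op s A \<in> q" using uf_int[OF uq] by blast
      then show ?thesis by (simp add: Q_def linv_compl Diff_eq)
    qed
    then show ?thesis by blast
  qed
  show ?thesis unfolding ultrafilter_on_def m
  proof (intro conjI allI impI)
    show "Q UNIV \<in> p" using QU uf_univ[OF p] by simp
    show "Q {} \<notin> p" using QE uf_empty[OF p] by simp
  next
    fix A B assume "Q A \<in> p \<and> A \<subseteq> B"
    then show "Q B \<in> p" using uf_mono[OF p] Qmono by blast
  next
    fix A B assume "Q A \<in> p \<and> Q B \<in> p"
    then show "Q (A \<inter> B) \<in> p" using uf_mono[OF p] uf_int[OF p] Qint by blast
  next
    fix A
    show "Q A \<in> p \<or> Q (- A) \<in> p"
    proof (rule ccontr)
      assume "\<not> (Q A \<in> p \<or> Q (- A) \<in> p)"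
      then have "-Q A \<in> p" "-Q (-A) \<in> p" using uf_compl[OF p] by blast+
      then have "-Q A \<inter> -Q (-A) \<in> p" using uf_int[OF p] by blast
      moreover have "-Q A \<inter> -Q (-A) = {}" using Qcompl[of A] by blast
      ultimately show False using uf_empty[OF p] by simp
    qed
  qed
qed

lemma mult_delta:
  assumes ps: "partial_semigroup op" and p: "p \<in> deltaS op" and q: "q \<in> deltaS op"
  shows "ult_mult op p q \<in> deltaS op"
proof -
  have "ultrafilter_on (ult_mult op p q)" by (rule mult_ultra[OF delta_uf[OF p] q])
  moreover have "phiS op x \<in> ult_mult op p q" for x
  proof -
    have "phiS op x \<subseteq> {s. linv op s (phiS op x) \<in> q}"
    proof
      fix s assume "s \<in> phiS op x"
      then obtain y where y: "op x s = Some y" by (auto simp: phiS_def)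
      have "phiS op s \<inter> phiS op y \<in> q" using q uf_int[OF delta_uf[OF q]] by (simp add: deltaS_def)
      then show "s \<in> {s. linv op s (phiS op x) \<in> q}" using linv_phi[OF ps y] by simp
    qed
    moreover have "phiS op x \<in> p" using p by (simp add: deltaS_def)
    ultimately show ?thesis unfolding ult_mult_def using uf_mono[OF delta_uf[OF p]] by blast
  qed
  ultimately show ?thesis by (simp add: deltaS_def betaS_def)
qed

lemma J_left:
  fixes op :: "'a pop"
  assumes ps: "partial_semigroup op" and pJ: "p \<in> J_delta op" and q: "q \<in> deltaS op"
    and A: "A \<in> ult_mult op q p"
  shows "J_delta_set op A"
  unfolding J_delta_set_def
proof (intro allI impI)
  fix F :: "(nat \<Rightarrow> 'a) set" and W :: "'a set" assume FW: "finite F \<and> F \<noteq> {} \<and> F \<subseteq> TS op \<and> finite W \<and> W \<noteq> {}"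
  have uq: "ultrafilter_on q" using q by (rule delta_uf)
  have "{s. linv op s A \<in> p} \<in> q" using A by (simp add: ult_mult_def)
  moreover have "sigmaS op W \<in> q" using sigma_in_delta[OF q] FW by blast
  ultimately have "{s. linv op s A \<in> p} \<inter> sigmaS op W \<in> q" by (rule uf_int[OF uq])
  then obtain s where s: "linv op s A \<in> p" "s \<in> sigmaS op W" using uf_ne[OF uq] by blast
  have Js: "J_delta_set op (linv op s A)" using pJ s(1) by (simp add: J_delta_def)
  define W' where "W' = insert s (rmult_set op W s)"
  have W': "finite W'" "W' \<noteq> {}" using FW finite_rmult_set[of W op s] unfolding W'_def by auto
  obtain a' H where a': "a' \<in> sigmaS op W'" and H: "finite H" "H \<noteq> {}"
    and prp: "\<forall>f\<in>F. \<exists>v. seqprod op f H = Some v \<and> v \<in> sigmaS op (rmult_set op W' a') \<and>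
                 (\<exists>u. op a' v = Some u \<and> u \<in> linv op s A)"
    using Js[unfolded J_delta_set_def, rule_format, of F W'] FW W' by blast
  obtain a where sa: "op s a' = Some a" using a' unfolding W'_def sigmaS_iff by auto
  have aW: "a \<in> sigmaS op W"
    unfolding sigmaS_iff
  proof
    fix w assume w: "w \<in> W"
    then obtain y where y: "op w s = Some y" using s(2) unfolding sigmaS_iff by auto
    then have "y \<in> W'" using w unfolding W'_def rmult_set_def by auto
    then have "op y a' \<noteq> None" using a' unfolding sigmaS_iff by blast
    moreover have "op y a' = op w a" using ps_SS[OF ps y sa] .
    ultimately show "op w a \<noteq> None" by simp
  qed
  show "\<exists>a\<in>sigmaS op W. \<exists>H. finite H \<and> H \<noteq> {} \<and> (\<forall>f\<in>F. \<exists>v. seqprod op f H = Some v \<and>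
           v \<in> sigmaS op (rmult_set op W a) \<and> (\<exists>u. op a v = Some u \<and> u \<in> A))"
  proof (intro bexI[OF _ aW] exI[of _ H] conjI ballI H)
    fix f assume "f \<in> F"
    then obtain v u where v: "seqprod op f H = Some v" "v \<in> sigmaS op (rmult_set op W' a')"
      "op a' v = Some u" "u \<in> linv op s A" using prp by blast
    obtain z where z: "op s u = Some z" "z \<in> A" using v(4) unfolding linv_def by blast
    have vs: "v \<in> sigmaS op (rmult_set op W a)"
      unfolding sigmaS_iff
    proof
      fix e assume "e \<in> rmult_set op W a"
      then obtain w where w: "w \<in> W" "op w a = Some e" unfolding rmult_set_def by blast
      then obtain y where y: "op w s = Some y" using s(2) unfolding sigmaS_iff by auto
      have "op y a' = Some e" using ps_SS[OF ps y sa] w(2) by simp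
      moreover have "y \<in> W'" using w(1) y unfolding W'_def rmult_set_def by auto
      ultimately have "e \<in> rmult_set op W' a'" unfolding rmult_set_def by blast
      then show "op e v \<noteq> None" using v(2) unfolding sigmaS_iff by blast
    qed
    have "op a v = op s u" using ps_SS[OF ps sa v(3)] .
    then show "\<exists>v. seqprod op f H = Some v \<and> v \<in> sigmaS op (rmult_set op W a) \<and>
        (\<exists>u. op a v = Some u \<and> u \<in> A)" using v(1) vs z by auto
  qed
qed

lemma J_right:
  fixes op :: "'a pop"
  assumes ps: "partial_semigroup op" and cm: "commutative_ps op"
    and pJ: "p \<in> J_delta op" and q: "q \<in> deltaS op"
    and A: "A \<in> ult_mult op p q"
  shows "J_delta_set op A"
  unfolding J_delta_set_def
proof (intro allI impI)
  fix F :: "(nat \<Rightarrow> 'a) set" and W :: "'a set" assume FW: "finite F \<and> F \<noteq> {} \<and> F \<subseteq> TS op \<and> finite W \<and> W \<noteq> {}"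
  have uq: "ultrafilter_on q" using q by (rule delta_uf)
  have "{s. linv op s A \<in> q} \<in> p" using A by (simp add: ult_mult_def)
  then have JC: "J_delta_set op {s. linv op s A \<in> q}" using pJ by (simp add: J_delta_def)
  obtain a H where a: "a \<in> sigmaS op W" and H: "finite H" "H \<noteq> {}"
    and prp: "\<forall>f\<in>F. \<exists>v. seqprod op f H = Some v \<and> v \<in> sigmaS op (rmult_set op W a) \<and>
                 (\<exists>u. op a v = Some u \<and> u \<in> {s. linv op s A \<in> q})"
    using JC[unfolded J_delta_set_def, rule_format, of F W] FW by blast
  then obtain V U where VU: "\<forall>f\<in>F. seqprod op f H = Some (V f) \<and> V f \<in> sigmaS op (rmult_set op W a) \<and>
                 op a (V f) = Some (U f) \<and> linv op (U f) A \<in> q"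
    by (metis (mono_tags, lifting) mem_Collect_eq)
  define K where "K = insert a (rmult_set op W a \<union> {z. \<exists>e\<in>rmult_set op W a. \<exists>f\<in>F. op e (V f) = Some z})"
  have finK: "finite K"
  proof -
    have "{z. \<exists>e\<in>rmult_set op W a. \<exists>f\<in>F. op e (V f) = Some z} \<subseteq>
          (\<lambda>(e,f). the (op e (V f))) ` (rmult_set op W a \<times> F)" by force
    moreover have fR: "finite (rmult_set op W a)" using FW finite_rmult_set[of W op a] by blast
    moreover have "finite (rmult_set op W a \<times> F)" using fR FW by blast
    ultimately have "finite {z. \<exists>e\<in>rmult_set op W a. \<exists>f\<in>F. op e (V f) = Some z}"
      using finite_subset by blast
    then show ?thesis unfolding K_def using fR by simp
  qed
  have "sigmaS op K \<in> q" using sigma_in_delta[OF q finK] .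
  moreover have "\<Inter>((\<lambda>f. linv op (U f) A) ` F) \<in> q"
    using VU FW by (intro uf_Inter[OF uq]) auto
  ultimately have "sigmaS op K \<inter> \<Inter>((\<lambda>f. linv op (U f) A) ` F) \<in> q" by (rule uf_int[OF uq])
  then obtain t where t: "t \<in> sigmaS op K" "\<forall>f\<in>F. t \<in> linv op (U f) A" using uf_ne[OF uq] by blast
  obtain a2 where a2: "op a t = Some a2" using t(1) unfolding K_def sigmaS_iff by auto
  have a2W: "a2 \<in> sigmaS op W"
    unfolding sigmaS_iff
  proof
    fix w assume w: "w \<in> W"
    then obtain e where e: "op w a = Some e" using a unfolding sigmaS_iff by auto
    then have "e \<in> K" using w unfolding K_def rmult_set_def by auto
    then have "op e t \<noteq> None" using t(1) unfolding sigmaS_iff by blast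
    moreover have "op e t = op w a2" using ps_SS[OF ps e a2] .
    ultimately show "op w a2 \<noteq> None" by simp
  qed
  show "\<exists>a\<in>sigmaS op W. \<exists>H. finite H \<and> H \<noteq> {} \<and> (\<forall>f\<in>F. \<exists>v. seqprod op f H = Some v \<and>
           v \<in> sigmaS op (rmult_set op W a) \<and> (\<exists>u. op a v = Some u \<and> u \<in> A))"
  proof (intro bexI[OF _ a2W] exI[of _ H] conjI ballI H)
    fix f assume f: "f \<in> F"
    have Vf: "seqprod op f H = Some (V f)" "V f \<in> sigmaS op (rmult_set op W a)"
      "op a (V f) = Some (U f)" using VU f by auto
    have vs: "V f \<in> sigmaS op (rmult_set op W a2)"
      unfolding sigmaS_iff
    proof
      fix d assume "d \<in> rmult_set op W a2"
      then obtain w where w: "w \<in> W" "op w a2 = Some d" unfolding rmult_set_def by blast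
      obtain e where e: "op w a = Some e" using a w(1) unfolding sigmaS_iff by auto
      have et: "op e t = Some d" using ps_SS[OF ps e a2] w(2) by simp
      have eR: "e \<in> rmult_set op W a" using w(1) e unfolding rmult_set_def by blast
      then obtain z where z: "op e (V f) = Some z" using Vf(2) unfolding sigmaS_iff by auto
      then have "z \<in> K" using eR f unfolding K_def by blast
      then obtain z' where z': "op z t = Some z'" using t(1) unfolding sigmaS_iff by auto
      have "op d (V f) = Option.bind (op e (V f)) (\<lambda>u. op u t)" by (rule ps_rcomm[OF ps cm et])
      also have "\<dots> = Some z'" using z z' by simp
      finally show "op d (V f) \<noteq> None" by simp
    qed
    obtain z where z: "op (U f) t = Some z" "z \<in> A" using t(2) f unfolding linv_def by blast
    have "op a2 (V f) = Option.bind (op a (V f)) (\<lambda>u. op u t)" by (rule ps_rcomm[OF ps cm a2])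
    also have "\<dots> = Some z" using Vf(3) z(1) by simp
    finally show "\<exists>v. seqprod op f H = Some v \<and> v \<in> sigmaS op (rmult_set op W a2) \<and>
        (\<exists>u. op a2 v = Some u \<and> u \<in> A)" using Vf(1) vs z(2) by blast
  qed
qed

definition passes :: "'a pop \<Rightarrow> 'a set \<Rightarrow> (nat \<Rightarrow> 'a) set \<Rightarrow> 'a set \<Rightarrow> bool" where
  "passes op B F W \<longleftrightarrow> (\<exists>a\<in>sigmaS op W. \<exists>H. finite H \<and> H \<noteq> {} \<and>
     (\<forall>f\<in>F. \<exists>v. seqprod op f H = Some v \<and> v \<in> sigmaS op (rmult_set op W a) \<and>
        (\<exists>u. op a v = Some u \<and> u \<in> B)))"

lemma J_passes: "J_delta_set op B \<longleftrightarrow>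
  (\<forall>F W. finite F \<and> F \<noteq> {} \<and> F \<subseteq> TS op \<and> finite W \<and> W \<noteq> {} \<longrightarrow> passes op B F W)"
  by (simp add: J_delta_set_def passes_def)

lemma noncover:
  fixes op :: "'a pop"
  assumes ps: "partial_semigroup op" and cm: "commutative_ps op" and ad: "adequate op"
    and K: "finite K" and BB: "finite BB" "\<forall>B\<in>BB. \<not> J_delta_set op B"
  shows "\<exists>s\<in>sigmaS op K. s \<notin> \<Union>BB"
proof (cases "BB = {}")
  case True
  show ?thesis
  proof (cases "K = {}")
    case True then show ?thesis using \<open>BB = {}\<close> by (simp add: sigmaS_def)
  next
    case False
    then have "sigmaS op K \<noteq> {}" using ad K unfolding adequate_def by blast
    then show ?thesis using \<open>BB = {}\<close> by auto
  qed
next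
  case False
  show ?thesis
  proof (rule ccontr)
    assume "\<not> (\<exists>s\<in>sigmaS op K. s \<notin> \<Union>BB)"
    then have sub: "sigmaS op K \<subseteq> \<Union>BB" by blast
    have "\<forall>B\<in>BB. \<exists>FW. finite (fst FW) \<and> fst FW \<noteq> {} \<and> fst FW \<subseteq> TS op \<and> finite (snd FW) \<and> snd FW \<noteq> {} \<and>
        \<not> passes op B (fst FW) (snd FW)"
    proof
      fix B assume "B \<in> BB"
      then have "\<not> J_delta_set op B" using BB(2) by blast
      then obtain F W where "finite F \<and> F \<noteq> {} \<and> F \<subseteq> TS op \<and> finite W \<and> W \<noteq> {} \<and>
        \<not> passes op B F W" unfolding J_passes by blast
      then show "\<exists>FW. finite (fst FW) \<and> fst FW \<noteq> {} \<and> fst FW \<subseteq> TS op \<and> finite (snd FW) \<and> snd FW \<noteq> {} \<and>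
        \<not> passes op B (fst FW) (snd FW)" by (intro exI[of _ "(F, W)"]) simp
    qed
    then obtain g where g: "\<forall>B\<in>BB. finite (fst (g B)) \<and> fst (g B) \<noteq> {} \<and> fst (g B) \<subseteq> TS op \<and>
        finite (snd (g B)) \<and> snd (g B) \<noteq> {} \<and> \<not> passes op B (fst (g B)) (snd (g B))"
      by (rule bchoice[elim_format]) blast
    define FF where "FF B = fst (g B)" for B
    define WW where "WW B = snd (g B)" for B
    obtain Bs where Bs: "set Bs = BB" using finite_list[OF BB(1)] by blast
    define n where "n = length Bs"
    define cl where "cl s = (if \<exists>i<n. s \<in> Bs!i then (LEAST i. s \<in> Bs!i) else n)" for s
    have clb: "\<forall>s. cl s < Suc n"
    proof
      fix s show "cl s < Suc n"
      proof (cases "\<exists>i<n. s \<in> Bs!i")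
        case True
        then obtain i where i: "i < n" "s \<in> Bs!i" by blast
        then have "(LEAST i. s \<in> Bs!i) \<le> i" by (rule_tac Least_le) simp
        then show ?thesis using True i unfolding cl_def by simp
      next
        case False
        then have "cl s = n" unfolding cl_def by (simp only: if_False)
        then show ?thesis by simp
      qed
    qed
    define F where "F = \<Union>(FF ` BB)"
    define W where "W = \<Union>(WW ` BB) \<union> K"
    have F: "finite F" "F \<noteq> {}" "F \<subseteq> TS op"
      using g BB(1) False unfolding F_def FF_def by auto
    have W: "finite W" "W \<noteq> {}"
      using g BB(1) False K unfolding W_def WW_def by auto
    obtain a H col where a: "a \<in> sigmaS op W" and H: "finite H" "H \<noteq> {}"
      and pr: "\<forall>f\<in>F. \<exists>v. seqprod op f H = Some v \<and> v \<in> sigmaS op (rmult_set op W a) \<and>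
          (\<exists>u. op a v = Some u \<and> cl u = col)"
      using gallai[OF ps cm ad F W clb] by blast
    obtain f0 where f0: "f0 \<in> F" using F(2) by blast
    then obtain v0 u0 where v0: "v0 \<in> sigmaS op (rmult_set op W a)" "op a v0 = Some u0" "cl u0 = col"
      using pr by blast
    have "u0 \<in> sigmaS op K"
      unfolding sigmaS_iff
    proof
      fix k assume k: "k \<in> K"
      then have "k \<in> W" by (simp add: W_def)
      then obtain e where e: "op k a = Some e" using a unfolding sigmaS_iff by auto
      then have "e \<in> rmult_set op W a" using \<open>k \<in> W\<close> unfolding rmult_set_def by blast
      then have "op e v0 \<noteq> None" using v0(1) unfolding sigmaS_iff by blast
      moreover have "op e v0 = op k u0" using ps_SS[OF ps e v0(2)] .
      ultimately show "op k u0 \<noteq> None" by simp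
    qed
    then have "u0 \<in> \<Union>BB" using sub by blast
    then have ex0: "\<exists>i<n. u0 \<in> Bs!i" using Bs unfolding n_def by (auto simp: in_set_conv_nth)
    define i0 where "i0 = (LEAST i. u0 \<in> Bs!i)"
    have coli: "col = i0" using v0(3) ex0 unfolding cl_def i0_def by simp
    have i0n: "i0 < n"
    proof -
      obtain i where i: "i < n" "u0 \<in> Bs!i" using ex0 by blast
      then have "i0 \<le> i" unfolding i0_def by (rule_tac Least_le) simp
      then show ?thesis using i by simp
    qed
    define B1 where "B1 = Bs!i0"
    have B1: "B1 \<in> BB" using i0n Bs unfolding B1_def n_def by auto
    have inB1: "u \<in> B1" if "cl u = col" for u
    proof -
      have ex: "\<exists>i<n. u \<in> Bs!i"
      proof (rule ccontr)
        assume "\<not> (\<exists>i<n. u \<in> Bs!i)"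
        then have "cl u = n" unfolding cl_def by (rule if_not_P)
        then show False using that coli i0n by simp
      qed
      then have "cl u = (LEAST i. u \<in> Bs!i)" unfolding cl_def by simp
      moreover have "u \<in> Bs!(LEAST i. u \<in> Bs!i)" using ex by (metis (mono_tags, lifting) LeastI)
      ultimately show ?thesis using that coli unfolding B1_def by simp
    qed
    have fail: "\<not> (\<exists>a\<in>sigmaS op (WW B1). \<exists>H. finite H \<and> H \<noteq> {} \<and>
           (\<forall>f\<in>FF B1. \<exists>v. seqprod op f H = Some v \<and>
                 v \<in> sigmaS op (rmult_set op (WW B1) a) \<and>
                 (\<exists>u. op a v = Some u \<and> u \<in> B1)))"
      using g B1 unfolding FF_def WW_def passes_def by blast
    have WB1: "WW B1 \<subseteq> W" using B1 unfolding W_def by blast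
    have FB1: "FF B1 \<subseteq> F" using B1 unfolding F_def by blast
    have "a \<in> sigmaS op (WW B1)" using a sigmaS_anti[OF WB1] by blast
    moreover have "\<forall>f\<in>FF B1. \<exists>v. seqprod op f H = Some v \<and>
                 v \<in> sigmaS op (rmult_set op (WW B1) a) \<and>
                 (\<exists>u. op a v = Some u \<and> u \<in> B1)"
    proof
      fix f assume "f \<in> FF B1"
      then have "f \<in> F" using FB1 by blast
      then obtain v u where vu: "seqprod op f H = Some v" "v \<in> sigmaS op (rmult_set op W a)"
        "op a v = Some u" "cl u = col" using pr by blast
      have "v \<in> sigmaS op (rmult_set op (WW B1) a)"
        using vu(2) sigmaS_anti[OF rmult_set_mono[OF WB1]] by blast
      then show "\<exists>v. seqprod op f H = Some v \<and>
                 v \<in> sigmaS op (rmult_set op (WW B1) a) \<and>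
                 (\<exists>u. op a v = Some u \<and> u \<in> B1)" using vu inB1 by blast
    qed
    ultimately show False using fail H by blast
  qed
qed

theorem theorem3p4:
  fixes op :: "'a pop"
  assumes "partial_semigroup op" and "commutative_ps op" and "adequate op"
  shows "J_delta op \<noteq> {} \<and> J_delta op \<subseteq> deltaS op \<and>
         (\<forall>p \<in> J_delta op. \<forall>q \<in> deltaS op.
             ult_mult op p q \<in> J_delta op \<and> ult_mult op q p \<in> J_delta op) \<and>
         closed_in_deltaS op (J_delta op)"
proof (intro conjI)
  note ps = assms(1) and cm = assms(2) and ad = assms(3)
  show "J_delta op \<subseteq> deltaS op" by (auto simp: J_delta_def)
  show "closed_in_deltaS op (J_delta op)"
    unfolding closed_in_deltaS_def
  proof
    fix p assume "p \<in> deltaS op - J_delta op"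
    then obtain A where "A \<in> p" "\<not> J_delta_set op A" by (auto simp: J_delta_def)
    then show "\<exists>A\<in>p. \<forall>r\<in>J_delta op. A \<notin> r" by (auto simp: J_delta_def)
  qed
  show "\<forall>p\<in>J_delta op. \<forall>q\<in>deltaS op. ult_mult op p q \<in> J_delta op \<and> ult_mult op q p \<in> J_delta op"
  proof (intro ballI conjI)
    fix p q assume p: "p \<in> J_delta op" and q: "q \<in> deltaS op"
    have pd: "p \<in> deltaS op" using p by (simp add: J_delta_def)
    show "ult_mult op p q \<in> J_delta op"
      unfolding J_delta_def using mult_delta[OF ps pd q] J_right[OF ps cm p q] by blast
    show "ult_mult op q p \<in> J_delta op"
      unfolding J_delta_def using mult_delta[OF ps q pd] J_left[OF ps p q] by blast
  qed
  show "J_delta op \<noteq> {}"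
  proof -
    define G where "G = range (phiS op) \<union> uminus ` {B. \<not> J_delta_set op B}"
    have "fip G" unfolding fip_def
    proof (intro allI impI)
      fix FF assume FF: "finite FF \<and> FF \<noteq> {} \<and> FF \<subseteq> G"
      have "FF \<inter> range (phiS op) \<subseteq> phiS op ` UNIV" by blast
      then obtain K where K: "finite K" "FF \<inter> range (phiS op) = phiS op ` K"
        using finite_subset_image[of "FF \<inter> range (phiS op)" "phiS op" UNIV] FF by blast
      define BB where "BB = {B. \<not> J_delta_set op B \<and> -B \<in> FF}"
      have "BB \<subseteq> uminus ` FF" unfolding BB_def by (auto intro: image_eqI[of _ uminus "- _"])
      then have fBB: "finite BB" using FF finite_surj by blast
      obtain s where s: "s \<in> sigmaS op K" "s \<notin> \<Union>BB"
        using noncover[OF ps cm ad K(1) fBB] unfolding BB_def by blast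
      have "s \<in> \<Inter>FF"
      proof
        fix X assume X: "X \<in> FF"
        then have "X \<in> G" using FF by blast
        then consider "X \<in> range (phiS op)" | B where "X = -B" "\<not> J_delta_set op B"
          unfolding G_def by blast
        then show "s \<in> X"
        proof cases
          case 1
          then have "X \<in> phiS op ` K" using K(2) X by blast
          then show ?thesis using s(1) unfolding sigmaS_def by blast
        next
          case 2
          then have "B \<in> BB" using X unfolding BB_def by blast
          then show ?thesis using s(2) 2(1) by blast
        qed
      qed
      then show "\<Inter>FF \<noteq> {}" by blast
    qed
    then obtain p where p: "ultrafilter_on p" "G \<subseteq> p" using ultrafilter_exists by blast
    have "phiS op x \<in> G" for x unfolding G_def by (intro UnI1 rangeI)
    then have "phiS op x \<in> p" for x using p(2) by blast
    then have "p \<in> deltaS op" using p(1) unfolding deltaS_def betaS_def by blast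
    moreover have "\<forall>A\<in>p. J_delta_set op A"
    proof (rule ballI, rule ccontr)
      fix A assume A: "A \<in> p" "\<not> J_delta_set op A"
      have "-A \<in> G" unfolding G_def by (intro UnI2 imageI) (simp add: A(2))
      then have "-A \<in> p" using p(2) by blast
      then have "A \<inter> -A \<in> p" by (rule uf_int[OF p(1) A(1)])
      then show False using uf_empty[OF p(1)] by simp
    qed
    ultimately show ?thesis unfolding J_delta_def by blast
  qed
qed

end
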